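(* Consider the discrete-time control system $x_{k+1}=f(x_k,u_k)$ with reward $r(x,u)=R-x^TQx$ and optimal discounted value $V_\gamma(x)=\sup_{\mathbf u}\sum_{k\ge0}\gamma^k r(\Psi(k,x,\mathbf u(k)),\mathbf u(k))$. Suppose the system is exponentially stabilizable in the following sense: there exist $M>0$ and $\lambda>0$ such that for each $x\in\mathbb R^n$ there is an infinite control sequence $\mathbf u$ with $R-r(\Psi(k,x,\mathbf u(k)),\mathbf u(k))\le M\|x\|^2e^{-\lambda k}$ for all $k\ge0$. Then for every $\gamma\in(0,1)$ and every $x\in\mathbb R^n$, $\frac{R}{1-\gamma}-V_\gamma(x)\le a_V\|x\|^2$ with $a_V=\frac{M}{1-e^{-\lambda}}$.
   Context: $x_k\in\mathbb R^n$, $u_k\in\mathcal U\subset\mathbb R^m$; $\Psi(k,x,\mathbf u(k))$ is the state at time $k$ starting from $x$ under the control sequence $\mathbf u$, and $\mathbf u(k)$ is its $k$-th input. $R>0$ is a constant and $Q$ is positive definite. *)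

theory Defs
  imports "HOL-Analysis.Analysis" "HOL-Library.Extended_Real"
begin

primrec Psi :: "('x \<Rightarrow> 'u \<Rightarrow> 'x) \<Rightarrow> nat \<Rightarrow> 'x \<Rightarrow> (nat \<Rightarrow> 'u) \<Rightarrow> 'x" where
  "Psi f 0 x u = x"
| "Psi f (Suc k) x u = f (Psi f k x u) (u k)"

definition reward :: "real \<Rightarrow> real^'n^'n \<Rightarrow> real^'n \<Rightarrow> 'u \<Rightarrow> real" where
  "reward R Q x v = R - x \<bullet> (Q *v x)"

definition pos_def :: "real^'n^'n \<Rightarrow> bool" where
  "pos_def Q \<longleftrightarrow> transpose Q = Q \<and> (\<forall>x. x \<noteq> 0 \<longrightarrow> x \<bullet> (Q *v x) > 0)"

definition controls :: "'u set \<Rightarrow> (nat \<Rightarrow> 'u) set" where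
  "controls U = {u. \<forall>k. u k \<in> U}"

text \<open>Discounted return: the infinite series as the limit of its partial sums,
  taken in the extended reals (it may diverge to minus infinity).\<close>
definition disc_return ::
  "('x \<Rightarrow> 'u \<Rightarrow> 'x) \<Rightarrow> ('x \<Rightarrow> 'u \<Rightarrow> real) \<Rightarrow> real \<Rightarrow> 'x \<Rightarrow> (nat \<Rightarrow> 'u) \<Rightarrow> ereal" where
  "disc_return f r \<gamma> x u =
     lim (\<lambda>N. ereal (\<Sum>k<N. \<gamma> ^ k * r (Psi f k x u) (u k)))"

definition V_opt ::
  "('x \<Rightarrow> 'u \<Rightarrow> 'x) \<Rightarrow> ('x \<Rightarrow> 'u \<Rightarrow> real) \<Rightarrow> 'u set \<Rightarrow> real \<Rightarrow> 'x \<Rightarrow> ereal" where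
  "V_opt f r U \<gamma> x = (SUP u \<in> controls U. disc_return f r \<gamma> x u)"

end

theory Submission
  imports Defs
begin

theorem proposition4:
  fixes f :: "real^'n \<Rightarrow> real^'m \<Rightarrow> real^'n"
    and U :: "(real^'m) set"
    and Q :: "real^'n^'n"
    and R M lam :: real
  assumes "R > 0" and "pos_def Q"
    and "M > 0" and "lam > 0"
    and stab: "\<forall>x. \<exists>u \<in> controls U. \<forall>k.
       R - reward R Q (Psi f k x u) (u k) \<le> M * (norm x)\<^sup>2 * exp (- lam * real k)"
  shows "\<forall>\<gamma>::real. 0 < \<gamma> \<and> \<gamma> < 1 \<longrightarrow> (\<forall>x.
     ereal (R / (1 - \<gamma>)) - V_opt f (reward R Q) U \<gamma> x
       \<le> ereal ((M / (1 - exp (- lam))) * (norm x)\<^sup>2))"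
proof (intro allI impI)
  fix \<gamma> :: real and x :: "real^'n"
  assume g: "0 < \<gamma> \<and> \<gamma> < 1"
  obtain u where uU: "u \<in> controls U" and ub: "\<And>k.
       R - reward R Q (Psi f k x u) (u k) \<le> M * (norm x)\<^sup>2 * exp (- lam * real k)"
    using stab by blast
  define a where "a = M * (norm x)\<^sup>2"
  have a0: "a \<ge> 0" using assms(3) by (simp add: a_def)
  define c where "c k = (Psi f k x u) \<bullet> (Q *v Psi f k x u)" for k
  have c0: "c k \<ge> 0" for k
    using assms(2) unfolding pos_def_def c_def
    by (metis inner_zero_left order_le_less)
  have cb: "c k \<le> a * exp (-lam) ^ k" for k
    using ub[of k] unfolding c_def reward_def a_def
    by (simp add: exp_of_nat_mult[symmetric] mult.commute)
  define h where "h k = \<gamma> ^ k * c k" for k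
  have h0: "h k \<ge> 0" for k using c0 g by (simp add: h_def)
  have hb: "h k \<le> a * exp (-lam) ^ k" for k
  proof -
    have "h k \<le> 1 * c k" unfolding h_def
      using c0[of k] g by (intro mult_right_mono) (auto simp: power_le_one)
    then show ?thesis using cb[of k] by simp
  qed
  have el: "exp (-lam) < 1" using assms(4) by simp
  have gs: "summable (\<lambda>k. a * exp (-lam) ^ k)"
    using el by (intro summable_mult summable_geometric) simp
  have hs: "summable h"
    by (rule summable_comparison_test'[OF gs, of 0]) (use h0 hb in auto)
  have hsum: "suminf h \<le> a / (1 - exp (-lam))"
  proof -
    have "suminf h \<le> (\<Sum>k. a * exp (-lam) ^ k)"
      using hs gs hb by (intro suminf_le) auto
    also have "\<dots> = a * (1 / (1 - exp (-lam)))"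
      using el by (subst suminf_mult) (simp_all add: suminf_geometric)
    finally show ?thesis by simp
  qed
  have gsum: "(\<lambda>k. R * \<gamma> ^ k) sums (R / (1 - \<gamma>))"
    using g sums_mult[OF geometric_sums[of \<gamma>], of R] by (simp add: divide_simps)
  have "(\<lambda>k. R * \<gamma> ^ k - h k) sums (R / (1 - \<gamma>) - suminf h)"
    using sums_diff[OF gsum summable_sums[OF hs]] .
  moreover have "\<And>k. R * \<gamma> ^ k - h k = \<gamma> ^ k * reward R Q (Psi f k x u) (u k)"
    by (simp add: h_def c_def reward_def algebra_simps)
  ultimately have ss: "(\<lambda>k. \<gamma> ^ k * reward R Q (Psi f k x u) (u k)) sums (R / (1 - \<gamma>) - suminf h)"
    by simp
  define S where "S = R / (1 - \<gamma>) - suminf h"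
  have "(\<lambda>N. ereal (\<Sum>k<N. \<gamma> ^ k * reward R Q (Psi f k x u) (u k))) \<longlonglongrightarrow> ereal S"
    using ss unfolding sums_def S_def by (simp add: tendsto_ereal)
  then have dr: "disc_return f (reward R Q) \<gamma> x u = ereal S"
    unfolding disc_return_def by (rule limI)
  have "ereal S \<le> V_opt f (reward R Q) U \<gamma> x"
    unfolding V_opt_def using uU dr by (metis SUP_upper)
  then have "ereal (R / (1 - \<gamma>)) - V_opt f (reward R Q) U \<gamma> x \<le> ereal (R / (1 - \<gamma>)) - ereal S"
    by (intro ereal_minus_mono) auto
  also have "\<dots> = ereal (suminf h)" by (simp add: S_def)
  also have "\<dots> \<le> ereal ((M / (1 - exp (- lam))) * (norm x)\<^sup>2)"
    using hsum by (simp add: a_def)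
  finally show "ereal (R / (1 - \<gamma>)) - V_opt f (reward R Q) U \<gamma> x
       \<le> ereal ((M / (1 - exp (- lam))) * (norm x)\<^sup>2)" .
qed

end
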